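(* Let $A$ be a real $n\times n$ matrix and let $\mathcal{A} = \begin{pmatrix} 0 & A \\ A^T & 0 \end{pmatrix}$ (a real symmetric $2n\times 2n$ matrix). Then $$e^{\mathcal{A}} = \begin{pmatrix} \cosh\left(\sqrt{AA^T}\right) & A\left(\sqrt{A^TA}\right)^{\dagger}\sinh\left(\sqrt{A^TA}\right) \\ \sinh\left(\sqrt{A^TA}\right)\left(\sqrt{A^TA}\right)^{\dagger}A^T & \cosh\left(\sqrt{A^TA}\right) \end{pmatrix}.$$
   Context: For a symmetric positive semidefinite matrix $M$, $\sqrt{M}$ denotes its unique symmetric positive semidefinite square root, and $\cosh$, $\sinh$ of a symmetric matrix are defined by the usual power series (equivalently via its eigendecomposition). $B^{\dagger}$ denotes the Moore–Penrose generalized inverse of $B$. In the paper $A$ is the adjacency matrix of a directed graph, but the identity is stated for this block matrix built from $A$. *)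

theory Defs
  imports "HOL-Analysis.Analysis"
begin

primrec matpow :: "real^'n^'n \<Rightarrow> nat \<Rightarrow> real^'n^'n" where
  "matpow M 0 = mat 1"
| "matpow M (Suc k) = M ** matpow M k"

definition mat_exp :: "real^'n^'n \<Rightarrow> real^'n^'n" where
  "mat_exp M = (\<Sum>k. (1 / fact k) *\<^sub>R matpow M k)"

definition mat_cosh :: "real^'n^'n \<Rightarrow> real^'n^'n" where
  "mat_cosh M = (\<Sum>k. (1 / fact (2*k)) *\<^sub>R matpow M (2*k))"

definition mat_sinh :: "real^'n^'n \<Rightarrow> real^'n^'n" where
  "mat_sinh M = (\<Sum>k. (1 / fact (2*k+1)) *\<^sub>R matpow M (2*k+1))"

definition symmetric_psd :: "real^'n^'n \<Rightarrow> bool" where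
  "symmetric_psd M \<longleftrightarrow> transpose M = M \<and> (\<forall>x. 0 \<le> x \<bullet> (M *v x))"

definition mat_sqrt :: "real^'n^'n \<Rightarrow> real^'n^'n" where
  "mat_sqrt M = (THE S. symmetric_psd S \<and> S ** S = M)"

definition pinv :: "real^'n^'m \<Rightarrow> real^'m^'n" where
  "pinv B = (THE X. B ** X ** B = B \<and> X ** B ** X = X \<and>
                    transpose (B ** X) = B ** X \<and> transpose (X ** B) = X ** B)"

text \<open>2x2 block matrix, rows/columns indexed by 'n + 'n (first block Inl, second Inr).\<close>
definition block2 :: "real^'n^'n \<Rightarrow> real^'n^'n \<Rightarrow> real^'n^'n \<Rightarrow> real^'n^'n
                      \<Rightarrow> real^('n + 'n)^('n + 'n)" where
  "block2 P Q R S = (\<chi> i j. case i of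
       Inl a \<Rightarrow> (case j of Inl b \<Rightarrow> P $ a $ b | Inr b \<Rightarrow> Q $ a $ b)
     | Inr a \<Rightarrow> (case j of Inl b \<Rightarrow> R $ a $ b | Inr b \<Rightarrow> S $ a $ b))"

end

theory Submission
  imports Defs
begin

lemma mm_add_r: "((A::real^'n^'m) + B) ** C = A ** C + B ** C"
  by (simp add: matrix_matrix_mult_def vec_eq_iff sum.distrib algebra_simps)
lemma mm_diff_r: "((A::real^'n^'m) - B) ** C = A ** C - B ** C"
  by (simp add: matrix_matrix_mult_def vec_eq_iff sum_subtractf algebra_simps)
lemma mm_diff_l: "(C::real^'n^'m) ** (A - B) = C ** A - C ** B"
  by (simp add: matrix_matrix_mult_def vec_eq_iff sum_subtractf algebra_simps)
lemma mm_scaleR_l: "(r *\<^sub>R (A::real^'n^'m)) ** B = r *\<^sub>R (A ** B)"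
  by (simp add: matrix_matrix_mult_def vec_eq_iff sum_distrib_left algebra_simps)
lemma mm_scaleR_r: "(A::real^'n^'m) ** (r *\<^sub>R B) = r *\<^sub>R (A ** B)"
  by (simp add: matrix_matrix_mult_def vec_eq_iff sum_distrib_left algebra_simps)
lemma mm_zero_l[simp]: "(0::real^'n^'m) ** B = 0"
  by (simp add: matrix_matrix_mult_def vec_eq_iff)
lemma mm_zero_r[simp]: "(A::real^'n^'m) ** (0::real^'k^'n) = 0"
  by (simp add: matrix_matrix_mult_def vec_eq_iff)

lemma bilinear_mm: "bilinear (\<lambda>(A::real^'n^'m) (B::real^'k^'n). A ** B)"
  unfolding bilinear_def
  by (auto intro!: linearI simp: matrix_add_ldistrib mm_add_r mm_scaleR_l mm_scaleR_r)

lemma bounded_bilinear_mm: "bounded_bilinear (\<lambda>(A::real^'n^'m) (B::real^'k^'n). A ** B)"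
  using bilinear_mm bilinear_conv_bounded_bilinear by blast

lemma bounded_linear_mm_left: "bounded_linear (\<lambda>B::real^'k^'n. (A::real^'n^'m) ** B)"
  using bounded_bilinear.bounded_linear_right[OF bounded_bilinear_mm] .
lemma bounded_linear_mm_right: "bounded_linear (\<lambda>A::real^'n^'m. A ** (B::real^'k^'n))"
  using bounded_bilinear.bounded_linear_left[OF bounded_bilinear_mm] .

lemma matpow_bound:
  obtains K :: real where "K \<ge> 0" "\<And>(M::real^'n^'n) k. norm (matpow M k) \<le> norm (mat 1 :: real^'n^'n) * (K * norm M) ^ k"
proof -
  obtain K where K: "K \<ge> 0" "\<And>(a::real^'n^'n) (b::real^'n^'n). norm (a ** b) \<le> norm a * norm b * K"
    using bounded_bilinear.nonneg_bounded[OF bounded_bilinear_mm] by blast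
  have "norm (matpow M k) \<le> norm (mat 1 :: real^'n^'n) * (K * norm M) ^ k" for M :: "real^'n^'n" and k
  proof (induction k)
    case 0 then show ?case by simp
  next
    case (Suc k)
    have "norm (matpow M (Suc k)) \<le> norm M * norm (matpow M k) * K" using K(2) by simp
    also have "\<dots> \<le> norm M * (norm (mat 1 :: real^'n^'n) * (K * norm M) ^ k) * K"
      using Suc K(1) by (simp add: mult_left_mono mult_right_mono)
    finally show ?case by (simp add: algebra_simps)
  qed
  then show ?thesis using that K(1) by blast
qed

lemma summable_matpow:
  fixes c :: "nat \<Rightarrow> real"
  assumes "\<And>k. \<bar>c k\<bar> \<le> 1 / fact k"
  shows "summable (\<lambda>k. c k *\<^sub>R matpow (M::real^'n^'n) k)"
proof -
  obtain K :: real where K: "K \<ge> 0" "\<And>(M::real^'n^'n) k. norm (matpow M k) \<le> norm (mat 1 :: real^'n^'n) * (K * norm M) ^ k"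
    using matpow_bound by blast
  let ?g = "\<lambda>k. norm (mat 1 :: real^'n^'n) * (inverse (fact k) * (K * norm M) ^ k)"
  have gs: "summable ?g" by (intro summable_mult summable_exp)
  have bnd: "norm (c k *\<^sub>R matpow M k) \<le> ?g k" for k
  proof -
    have "norm (c k *\<^sub>R matpow M k) = \<bar>c k\<bar> * norm (matpow M k)" by simp
    also have "\<dots> \<le> (1 / fact k) * norm (matpow M k)"
      by (rule mult_right_mono[OF assms norm_ge_zero])
    also have "\<dots> \<le> (1 / fact k) * (norm (mat 1 :: real^'n^'n) * (K * norm M) ^ k)"
      by (rule mult_left_mono[OF K(2)]) simp
    finally show ?thesis by (simp add: divide_inverse mult.commute mult.left_commute)
  qed
  show ?thesis
    by (rule summable_comparison_test[OF _ gs]) (blast intro: bnd)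
qed


lemma sum_UNIV_Plus: "(\<Sum>x\<in>(UNIV::('a::finite + 'b::finite) set). f x) = (\<Sum>a\<in>UNIV. f (Inl a)) + (\<Sum>b\<in>UNIV. f (Inr b))"
proof -
  have "sum f (UNIV::('a + 'b) set) = sum f (UNIV <+> UNIV)" by (simp only: UNIV_Plus_UNIV)
  also have "\<dots> = (\<Sum>a\<in>UNIV. f (Inl a)) + (\<Sum>b\<in>UNIV. f (Inr b))"
    by (subst sum.Plus) (simp_all add: comp_def)
  finally show ?thesis .
qed

lemma block2_nth:
  "block2 P Q R S $ Inl a $ Inl b = P $ a $ b"
  "block2 P Q R S $ Inl a $ Inr b = Q $ a $ b"
  "block2 P Q R S $ Inr a $ Inl b = R $ a $ b"
  "block2 P Q R S $ Inr a $ Inr b = S $ a $ b"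
  by (simp_all add: block2_def)

lemma block2_eq_iff: "(M::real^('n::finite+'n)^('n+'n)) = M' \<longleftrightarrow> (\<forall>i j. M $ i $ j = M' $ i $ j)"
  by (simp add: vec_eq_iff)

lemma block2_mult:
  "block2 P Q R S ** block2 P' Q' R' S' =
   block2 (P**P' + Q**R') (P**Q' + Q**S') (R**P' + S**R') (R**Q' + S**S')"
  unfolding block2_eq_iff
proof (intro allI)
  fix i j :: "'a + 'a"
  show "(block2 P Q R S ** block2 P' Q' R' S') $ i $ j =
   block2 (P**P' + Q**R') (P**Q' + Q**S') (R**P' + S**R') (R**Q' + S**S') $ i $ j"
    by (cases i; cases j) (simp_all add: matrix_matrix_mult_def sum_UNIV_Plus block2_nth)
qed

lemma block2_add: "block2 P Q R S + block2 P' Q' R' S' = block2 (P+P') (Q+Q') (R+R') (S+S')"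
  unfolding block2_eq_iff by (intro allI, case_tac i; case_tac j) (simp_all add: block2_nth)

lemma block2_scaleR: "c *\<^sub>R block2 P Q R S = block2 (c *\<^sub>R P) (c *\<^sub>R Q) (c *\<^sub>R R) (c *\<^sub>R S)"
  unfolding block2_eq_iff by (intro allI, case_tac i; case_tac j) (simp_all add: block2_nth)

lemma block2_zero: "block2 0 0 0 0 = 0"
  unfolding block2_eq_iff by (intro allI, case_tac i; case_tac j) (simp_all add: block2_nth)

lemma block2_split: "block2 P Q R S = block2 P 0 0 0 + block2 0 Q 0 0 + block2 0 0 R 0 + block2 0 0 0 S"
  by (simp add: block2_add)

lemma bl_block2_1: "bounded_linear (\<lambda>P. block2 P 0 0 0)"
  by (rule linear_conv_bounded_linear[THEN iffD1], rule linearI)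
     (metis add.right_neutral block2_add, metis block2_scaleR scaleR_zero_right)
lemma bl_block2_2: "bounded_linear (\<lambda>P. block2 0 P 0 0)"
  by (rule linear_conv_bounded_linear[THEN iffD1], rule linearI)
     (metis add.right_neutral block2_add, metis block2_scaleR scaleR_zero_right)
lemma bl_block2_3: "bounded_linear (\<lambda>P. block2 0 0 P 0)"
  by (rule linear_conv_bounded_linear[THEN iffD1], rule linearI)
     (metis add.right_neutral block2_add, metis block2_scaleR scaleR_zero_right)
lemma bl_block2_4: "bounded_linear (\<lambda>P. block2 0 0 0 P)"
  by (rule linear_conv_bounded_linear[THEN iffD1], rule linearI)
     (metis add.right_neutral block2_add, metis block2_scaleR scaleR_zero_right)

lemma block2_sums:
  assumes "P sums p" "Q sums q" "R sums r" "S sums s"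
  shows "(\<lambda>k. block2 (P k) (Q k) (R k) (S k)) sums block2 p q r s"
proof -
  have "(\<lambda>k. block2 (P k) 0 0 0 + block2 0 (Q k) 0 0 + block2 0 0 (R k) 0 + block2 0 0 0 (S k))
     sums (block2 p 0 0 0 + block2 0 q 0 0 + block2 0 0 r 0 + block2 0 0 0 s)"
    by (intro sums_add bounded_linear.sums[OF bl_block2_1] bounded_linear.sums[OF bl_block2_2]
          bounded_linear.sums[OF bl_block2_3] bounded_linear.sums[OF bl_block2_4] assms)
  then show ?thesis by (simp only: block2_split[symmetric])
qed

lemma matpow_transpose_comm:
  "transpose A ** matpow (A ** transpose A) k = matpow (transpose A ** A) k ** transpose (A::real^'n^'n)"
proof (induction k)
  case 0 then show ?case by simp
next
  case (Suc k)
  have "transpose A ** matpow (A ** transpose A) (Suc k) = (transpose A ** A) ** (transpose A ** matpow (A ** transpose A) k)"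
    by (simp add: matrix_mul_assoc)
  also have "\<dots> = matpow (transpose A ** A) (Suc k) ** transpose A"
    by (simp add: Suc matrix_mul_assoc)
  finally show ?case .
qed

lemma matpow_block_even:
  "matpow (block2 0 A (transpose A) 0) (2*k) = block2 (matpow (A ** transpose A) k) 0 0 (matpow (transpose A ** A) k)"
proof (induction k)
  case 0
  show ?case unfolding block2_eq_iff
    by (intro allI, case_tac i; case_tac j) (simp_all add: block2_nth mat_def)
next
  case (Suc k)
  have "2 * Suc k = Suc (Suc (2*k))" by simp
  then show ?case
    by (simp add: Suc block2_mult matrix_mul_assoc)
qed

lemma matpow_block_odd:
  "matpow (block2 0 A (transpose A) 0) (2*k+1) = block2 0 (A ** matpow (transpose A ** A) k) (transpose A ** matpow (A ** transpose A) k) 0"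
  by (simp add: matpow_block_even block2_mult)

lemma sums_even_odd:
  fixes f :: "nat \<Rightarrow> 'a::real_normed_vector"
  assumes "summable f" "(\<lambda>k. f (2*k)) sums s" "(\<lambda>k. f (2*k+1)) sums t"
  shows "suminf f = s + t"
proof -
  have "(\<lambda>n. sum f {n * 2 ..< n * 2 + 2}) sums suminf f"
    using sums_group[OF summable_sums[OF assms(1)], of 2] by simp
  moreover have "sum f {n * 2 ..< n * 2 + 2} = f (2*n) + f (2*n+1)" for n
    by (simp add: numeral_2_eq_2 mult.commute)
  ultimately have "(\<lambda>n. f (2*n) + f (2*n+1)) sums suminf f" by simp
  moreover have "(\<lambda>n. f (2*n) + f (2*n+1)) sums (s + t)" using assms by (intro sums_add)
  ultimately show ?thesis using sums_unique2 by blast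
qed

lemma fact_le_aux1: "\<bar>1 / fact (2*k) :: real\<bar> \<le> 1 / fact k"
  by (simp add: divide_simps fact_mono)
lemma fact_le_aux2: "\<bar>1 / fact (2*k+1) :: real\<bar> \<le> 1 / fact k"
proof -
  have "fact k \<le> (fact (2*k+1)::real)" by (rule fact_mono) simp
  moreover have "(0::real) < fact k" by simp
  ultimately have "1 / fact (2*k+1) \<le> (1 / fact k :: real)"
    by (intro frac_le) simp_all
  then show ?thesis by simp
qed

lemma exp_block:
  fixes A :: "real^'n^'n"
  defines "X \<equiv> A ** transpose A" and "Y \<equiv> transpose A ** A"
  shows "mat_exp (block2 0 A (transpose A) 0) =
    block2 (\<Sum>k. (1 / fact (2*k)) *\<^sub>R matpow X k)
           (A ** (\<Sum>k. (1 / fact (2*k+1)) *\<^sub>R matpow Y k))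
           ((\<Sum>k. (1 / fact (2*k+1)) *\<^sub>R matpow Y k) ** transpose A)
           (\<Sum>k. (1 / fact (2*k)) *\<^sub>R matpow Y k)"
proof -
  let ?M = "block2 0 A (transpose A) 0"
  let ?f = "\<lambda>k. (1 / fact k) *\<^sub>R matpow ?M k"
  have sX: "summable (\<lambda>k. (1 / fact (2*k)) *\<^sub>R matpow X k)"
    and sY: "summable (\<lambda>k. (1 / fact (2*k)) *\<^sub>R matpow Y k)"
    and tX: "summable (\<lambda>k. (1 / fact (2*k+1)) *\<^sub>R matpow X k)"
    and tY: "summable (\<lambda>k. (1 / fact (2*k+1)) *\<^sub>R matpow Y k)"
    by (intro summable_matpow fact_le_aux1 fact_le_aux2)+
  have sf: "summable ?f" by (intro summable_matpow) simp
  have ev: "(\<lambda>k. ?f (2*k)) sums block2 (\<Sum>k. (1 / fact (2*k)) *\<^sub>R matpow X k) 0 0 (\<Sum>k. (1 / fact (2*k)) *\<^sub>R matpow Y k)"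
    unfolding matpow_block_even block2_scaleR scaleR_zero_right X_def[symmetric] Y_def[symmetric]
    by (intro block2_sums summable_sums sX sY sums_zero)
  have a1: "(\<lambda>k. (1 / fact (2*k+1)) *\<^sub>R (A ** matpow Y k)) sums (A ** (\<Sum>k. (1 / fact (2*k+1)) *\<^sub>R matpow Y k))"
    using bounded_linear.sums[OF bounded_linear_mm_left summable_sums[OF tY], of A]
    by (simp add: mm_scaleR_r)
  have a2: "(\<lambda>k. (1 / fact (2*k+1)) *\<^sub>R (transpose A ** matpow X k)) sums ((\<Sum>k. (1 / fact (2*k+1)) *\<^sub>R matpow Y k) ** transpose A)"
    using bounded_linear.sums[OF bounded_linear_mm_right summable_sums[OF tY], of "transpose A"]
    by (simp add: mm_scaleR_l X_def Y_def matpow_transpose_comm)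
  have od: "(\<lambda>k. ?f (2*k+1)) sums block2 0 (A ** (\<Sum>k. (1 / fact (2*k+1)) *\<^sub>R matpow Y k))
           ((\<Sum>k. (1 / fact (2*k+1)) *\<^sub>R matpow Y k) ** transpose A) 0"
    unfolding matpow_block_odd block2_scaleR scaleR_zero_right X_def[symmetric] Y_def[symmetric]
    by (intro block2_sums a1 a2 sums_zero)
  show ?thesis
    unfolding mat_exp_def using sums_even_odd[OF sf ev od]
    by (simp add: block2_add)
qed


lemma sym_inner:
  fixes N :: "real^'n^'n"
  assumes "transpose N = N"
  shows "x \<bullet> (N *v y) = (N *v x) \<bullet> y"
proof -
  have "x v* N = N *v x" using transpose_matrix_vector[of N x] assms by simp
  then show ?thesis using dot_lmul_matrix[of x N y] by simp
qed

lemma quad_scalar_aux: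
  fixes a b :: real
  assumes "\<And>t. 0 \<le> 2*t*a + t^2*b" "0 \<le> b"
  shows "a = 0"
proof -
  have "0 \<le> 2*(-a/(b+1))*a + (-a/(b+1))^2*b" by (rule assms(1))
  moreover have "2*(-a/(b+1))*a + (-a/(b+1))^2*b = (-2*a*a*(b+1) + a*a*b) / (b+1)^2"
    using assms(2) by (simp add: divide_simps power2_eq_square)
  ultimately have "0 \<le> (-2*a*a*(b+1) + a*a*b) / (b+1)^2" by simp
  then have "0 \<le> -2*a*a*(b+1) + a*a*b"
    using assms(2) by (simp add: zero_le_divide_iff)
  then have "a*a*(b+2) \<le> 0" by (simp add: algebra_simps)
  moreover have "0 \<le> a*a" by simp
  ultimately have "a*a = 0" using assms(2)
    by (metis add_nonneg_pos mult_le_0_iff nle_le zero_less_numeral linorder_not_le mult_pos_pos not_square_less_zero)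
  then show ?thesis by simp
qed

lemma psd_zero_sub:
  fixes P :: "real^'n^'n"
  assumes W: "subspace W" and sym: "transpose P = P"
    and psd: "\<And>y. y \<in> W \<Longrightarrow> 0 \<le> y \<bullet> (P *v y)"
    and v: "v \<in> W" "v \<bullet> (P *v v) = 0" "P *v v \<in> W"
  shows "P *v v = 0"
proof -
  let ?w = "P *v v"
  have "0 \<le> 2*t*(?w \<bullet> ?w) + t^2*(?w \<bullet> (P *v ?w))" for t
  proof -
    have "v + t *\<^sub>R ?w \<in> W" using W v by (simp add: subspace_add subspace_scale)
    then have "0 \<le> (v + t *\<^sub>R ?w) \<bullet> (P *v (v + t *\<^sub>R ?w))" by (rule psd)
    also have "\<dots> = v \<bullet> ?w + t * (v \<bullet> (P *v ?w)) + t * (?w \<bullet> ?w) + t^2 * (?w \<bullet> (P *v ?w))"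
      by (simp add: matrix_vector_right_distrib matrix_vector_mult_scaleR inner_add_left inner_add_right power2_eq_square algebra_simps)
    also have "v \<bullet> (P *v ?w) = ?w \<bullet> ?w" using sym_inner[OF sym, of v ?w] by simp
    finally show ?thesis using v(2) by (simp add: algebra_simps)
  qed
  moreover have "0 \<le> ?w \<bullet> (P *v ?w)" using psd v(3) by blast
  ultimately have "?w \<bullet> ?w = 0" by (rule quad_scalar_aux)
  then show ?thesis by simp
qed


lemma mat_mulv: "(mat c :: real^'n^'n) *v x = c *\<^sub>R x"
  by (simp add: vec_eq_iff matrix_vector_mult_def mat_def if_distrib if_distribR cong: if_cong)

lemma transpose_mat_c: "transpose (mat c :: real^'n^'n) = mat c"
  by (simp add: transpose_def mat_def vec_eq_iff eq_commute)

lemma transpose_diff: "transpose (A - B :: real^'n^'n) = transpose A - transpose B"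
  by (simp add: transpose_def vec_eq_iff)

lemma eig_exists:
  fixes N :: "real^'n^'n"
  assumes sym: "transpose N = N" and W: "subspace W" and w0: "w0 \<in> W" "w0 \<noteq> 0"
    and inv: "\<And>x. x \<in> W \<Longrightarrow> N *v x \<in> W"
  shows "\<exists>v\<in>W. norm v = 1 \<and> N *v v = (v \<bullet> (N *v v)) *\<^sub>R v"
proof -
  let ?K = "sphere 0 1 \<inter> W"
  let ?q = "\<lambda>x. x \<bullet> (N *v x)"
  have "compact ?K" using W by (intro compact_Int_closed compact_sphere closed_subspace)
  moreover have "(1 / norm w0) *\<^sub>R w0 \<in> ?K" using w0 W by (simp add: subspace_scale)
  then have "?K \<noteq> {}" by blast
  moreover have "continuous_on ?K ?q" by (intro continuous_intros)
  ultimately obtain v where v: "v \<in> ?K" and vmax: "\<And>y. y \<in> ?K \<Longrightarrow> ?q y \<le> ?q v"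
    using continuous_attains_sup[of ?K ?q] by blast
  let ?l = "?q v"
  let ?P = "mat ?l - N"
  have Pv: "?P *v x = ?l *\<^sub>R x - N *v x" for x
    by (simp add: matrix_vector_mult_diff_rdistrib mat_mulv)
  have psd: "0 \<le> y \<bullet> (?P *v y)" if y: "y \<in> W" for y
  proof (cases "y = 0")
    case True then show ?thesis by simp
  next
    case False
    let ?u = "(1 / norm y) *\<^sub>R y"
    have "?u \<in> ?K" using y W False by (simp add: subspace_scale)
    then have "?q ?u \<le> ?l" by (rule vmax)
    then have "(1 / norm y)^2 * ?q y \<le> ?l"
      by (simp add: matrix_vector_mult_scaleR power2_eq_square)
    then have "?q y \<le> ?l * (norm y)^2" using False
      by (simp add: field_simps)
    then show ?thesis using Pv by (simp add: inner_diff_right power2_norm_eq_inner)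
  qed
  have vW: "v \<in> W" and vn: "norm v = 1" using v by auto
  have "v \<bullet> (?P *v v) = 0" using vn Pv by (simp add: inner_diff_right power2_norm_eq_inner[symmetric])
  moreover have "?P *v v \<in> W" using Pv W vW inv by (simp add: subspace_diff subspace_scale)
  moreover have "transpose ?P = ?P" using sym by (simp add: transpose_diff transpose_mat_c)
  ultimately have "?P *v v = 0" using psd_zero_sub[OF W _ psd vW] by blast
  then show ?thesis using Pv vW vn by (auto simp: algebra_simps)
qed


lemma eigenbasis_aux:
  fixes N :: "real^'n^'n"
  assumes sym: "transpose N = N"
  shows "k \<le> CARD('n) \<Longrightarrow> \<exists>B. finite B \<and> card B = k \<and> (\<forall>b\<in>B. norm b = 1) \<and> pairwise orthogonal B
           \<and> (\<forall>b\<in>B. N *v b = (b \<bullet> (N *v b)) *\<^sub>R b)"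
proof (induction k)
  case 0 show ?case by (intro exI[of _ "{}"]) simp
next
  case (Suc k)
  then obtain B where B: "finite B" "card B = k" "\<forall>b\<in>B. norm b = 1" "pairwise orthogonal B"
    "\<forall>b\<in>B. N *v b = (b \<bullet> (N *v b)) *\<^sub>R b" by auto
  have "dim B \<le> card B" using B(1) by (intro dim_le_card) (auto intro: span_base)
  then have "dim B < DIM(real^'n)" using B(2) Suc(2) by simp
  then obtain x :: "real^'n" where x: "x \<noteq> 0" "\<And>y. y \<in> span B \<Longrightarrow> orthogonal x y"
    using orthogonal_to_subspace_exists by blast
  define W where "W = {x::real^'n. \<forall>b\<in>B. b \<bullet> x = 0}"
  have W: "subspace W" unfolding W_def subspace_def
    by (simp add: inner_add_right)
  have xW: "x \<in> W" unfolding W_def mem_Collect_eq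
  proof
    fix b assume "b \<in> B"
    then have "orthogonal x b" using x(2) span_base by blast
    then show "b \<bullet> x = 0" by (simp add: orthogonal_def inner_commute)
  qed
  have inv: "N *v y \<in> W" if y: "y \<in> W" for y
    unfolding W_def mem_Collect_eq
  proof
    fix b assume b: "b \<in> B"
    obtain mu where e: "N *v b = mu *\<^sub>R b" using B(5) b by blast
    have "b \<bullet> (N *v y) = (N *v b) \<bullet> y" by (rule sym_inner[OF sym])
    also have "\<dots> = mu * (b \<bullet> y)" unfolding e by simp
    also have "b \<bullet> y = 0" using y b unfolding W_def by blast
    finally show "b \<bullet> (N *v y) = 0" by simp
  qed
  obtain v where v: "v \<in> W" "norm v = 1" "N *v v = (v \<bullet> (N *v v)) *\<^sub>R v"
    using eig_exists[OF sym W xW x(1) inv] by blast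
  have vB: "v \<notin> B"
  proof
    assume "v \<in> B"
    then have "v \<bullet> v = 0" using v(1) unfolding W_def by blast
    then show False using v(2) by simp
  qed
  have "pairwise orthogonal (insert v B)"
    using B(4) v(1) unfolding W_def pairwise_insert orthogonal_def
    by (simp add: inner_commute)
  then show ?case using B vB v
    by (intro exI[of _ "insert v B"]) auto
qed

lemma onb_expand:
  fixes B :: "(real^'n) set"
  assumes B: "finite B" "card B = CARD('n)" "\<forall>b\<in>B. norm b = 1" "pairwise orthogonal B"
  shows "x = (\<Sum>b\<in>B. (b \<bullet> x) *\<^sub>R b)"
proof -
  have "0 \<notin> B" using B(3) by force
  then have ind: "independent B" using B(4) pairwise_orthogonal_independent by blast
  then have "dim B = DIM(real^'n)" using B(2) dim_eq_card_independent[OF ind] by simp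
  then have "span B = UNIV" using dim_eq_full by blast
  then obtain u where u: "x = (\<Sum>c\<in>B. u c *\<^sub>R c)" using span_finite[OF B(1)] by auto
  have "b \<bullet> x = u b" if b: "b \<in> B" for b
  proof -
    have "b \<bullet> x = (\<Sum>c\<in>B. u c * (b \<bullet> c))" unfolding u by (simp add: inner_sum_right)
    also have "\<dots> = u b * (b \<bullet> b)"
    proof (rule sum.remove[OF B(1) b, THEN trans])
      have "(\<Sum>c\<in>B - {b}. u c * (b \<bullet> c)) = 0"
        using B(4) b by (intro sum.neutral) (auto simp: pairwise_def orthogonal_def)
      then show "u b * (b \<bullet> b) + (\<Sum>c\<in>B - {b}. u c * (b \<bullet> c)) = u b * (b \<bullet> b)" by simp
    qed
    also have "\<dots> = u b" using B(3) b by (simp add: power2_norm_eq_inner[symmetric])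
    finally show ?thesis .
  qed
  then show ?thesis using u by (metis (no_types, lifting) sum.cong)
qed


definition Fm :: "(real^'n) set \<Rightarrow> (real^'n \<Rightarrow> real) \<Rightarrow> real^'n^'n" where
  "Fm B f = (\<chi> i j. \<Sum>b\<in>B. f b * (b$i * b$j))"

definition onb :: "(real^'n) set \<Rightarrow> bool" where
  "onb B \<longleftrightarrow> finite B \<and> card B = CARD('n) \<and> (\<forall>b\<in>B. norm b = 1) \<and> pairwise orthogonal B"

lemma mulv_sum: "(A::real^'n^'m) *v (\<Sum>c\<in>C. f c) = (\<Sum>c\<in>C. A *v f c)"
  by (induction C rule: infinite_finite_induct) (simp_all add: matrix_vector_right_distrib)

lemma Fm_mulv: "Fm B f *v x = (\<Sum>b\<in>B. (f b * (b \<bullet> x)) *\<^sub>R b)"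
  apply (simp add: vec_eq_iff matrix_vector_mult_def inner_vec_def Fm_def sum_distrib_left sum_distrib_right sum_component)
  apply (intro allI)
  apply (subst sum.swap)
  apply (simp add: mult_ac)
  done

lemma onb_orth: "onb B \<Longrightarrow> b \<in> B \<Longrightarrow> c \<in> B \<Longrightarrow> b \<noteq> c \<Longrightarrow> b \<bullet> c = 0"
  unfolding onb_def pairwise_def orthogonal_def by blast

lemma onb_norm: "onb B \<Longrightarrow> b \<in> B \<Longrightarrow> b \<bullet> b = 1"
  unfolding onb_def by (simp add: power2_norm_eq_inner[symmetric])

lemma onb_finite: "onb B \<Longrightarrow> finite B"
  unfolding onb_def by simp

lemma Fm_eig:
  assumes B: "onb B" and b: "b \<in> B"
  shows "Fm B f *v b = f b *\<^sub>R b"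
proof -
  have "Fm B f *v b = (f b * (b \<bullet> b)) *\<^sub>R b + (\<Sum>c\<in>B - {b}. (f c * (c \<bullet> b)) *\<^sub>R c)"
    unfolding Fm_mulv by (rule sum.remove[OF onb_finite[OF B] b])
  also have "(\<Sum>c\<in>B - {b}. (f c * (c \<bullet> b)) *\<^sub>R c) = 0"
    by (intro sum.neutral) (auto simp: onb_orth[OF B _ b])
  finally show ?thesis using onb_norm[OF B b] by simp
qed

lemma Fm_mul:
  assumes B: "onb B"
  shows "Fm B f ** Fm B g = Fm B (\<lambda>b. f b * g b)"
  unfolding matrix_eq
proof
  fix x
  have "(Fm B f ** Fm B g) *v x = Fm B f *v (Fm B g *v x)" by (simp add: matrix_vector_mul_assoc)
  also have "\<dots> = (\<Sum>c\<in>B. (g c * (c \<bullet> x)) *\<^sub>R (Fm B f *v c))"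
    unfolding Fm_mulv[of B g] mulv_sum by (simp add: matrix_vector_mult_scaleR)
  also have "\<dots> = (\<Sum>c\<in>B. ((f c * g c) * (c \<bullet> x)) *\<^sub>R c)"
    by (intro sum.cong) (simp_all add: Fm_eig[OF B])
  also have "\<dots> = Fm B (\<lambda>b. f b * g b) *v x" by (simp add: Fm_mulv)
  finally show "(Fm B f ** Fm B g) *v x = Fm B (\<lambda>b. f b * g b) *v x" .
qed

lemma Fm_transpose: "transpose (Fm B f) = Fm B f"
  by (simp add: transpose_def Fm_def vec_eq_iff mult.commute)

lemma Fm_cong: "(\<And>b. b \<in> B \<Longrightarrow> f b = g b) \<Longrightarrow> Fm B f = Fm B g"
  unfolding Fm_def by (simp add: vec_eq_iff)

lemma Fm_zero: "Fm B (\<lambda>b. 0) = 0"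
  unfolding Fm_def by (simp add: vec_eq_iff)

lemma Fm_quad: "x \<bullet> (Fm B f *v x) = (\<Sum>b\<in>B. f b * (b \<bullet> x)^2)"
  unfolding Fm_mulv by (simp add: inner_sum_right power2_eq_square inner_commute mult_ac)

lemma Fm_rep:
  fixes N :: "real^'n^'n"
  assumes B: "onb B" and eig: "\<forall>b\<in>B. N *v b = (b \<bullet> (N *v b)) *\<^sub>R b"
  shows "N = Fm B (\<lambda>b. b \<bullet> (N *v b))"
  unfolding matrix_eq
proof
  fix x
  have ex: "x = (\<Sum>b\<in>B. (b \<bullet> x) *\<^sub>R b)" using B unfolding onb_def by (intro onb_expand) auto
  have "N *v x = (\<Sum>b\<in>B. (b \<bullet> x) *\<^sub>R (N *v b))"
    by (subst ex) (simp add: mulv_sum matrix_vector_mult_scaleR)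
  also have "\<dots> = (\<Sum>b\<in>B. ((b \<bullet> (N *v b)) * (b \<bullet> x)) *\<^sub>R b)"
    by (intro sum.cong refl) (metis eig scaleR_scaleR mult.commute)
  finally show "N *v x = Fm B (\<lambda>b. b \<bullet> (N *v b)) *v x" by (simp add: Fm_mulv)
qed

lemma spectral:
  fixes N :: "real^'n^'n"
  assumes "transpose N = N"
  obtains B where "onb B" "N = Fm B (\<lambda>b. b \<bullet> (N *v b))"
proof -
  obtain B where B: "finite B" "card B = CARD('n)" "\<forall>b\<in>B. norm b = 1" "pairwise orthogonal B"
    "\<forall>b\<in>B. N *v b = (b \<bullet> (N *v b)) *\<^sub>R b"
    using eigenbasis_aux[OF assms, of "CARD('n)"] by auto
  then have "onb B" unfolding onb_def by auto
  then show ?thesis using that Fm_rep B(5) by blast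
qed


lemma psd_zero:
  fixes P :: "real^'n^'n"
  assumes "symmetric_psd P" "v \<bullet> (P *v v) = 0"
  shows "P *v v = 0"
  using assms psd_zero_sub[of UNIV P v] unfolding symmetric_psd_def by auto

lemma sqrt_exists:
  fixes M :: "real^'n^'n"
  assumes M: "symmetric_psd M"
  shows "\<exists>S. symmetric_psd S \<and> S ** S = M"
proof -
  have sym: "transpose M = M" using M unfolding symmetric_psd_def by simp
  obtain B where B: "onb B" and Mr: "M = Fm B (\<lambda>b. b \<bullet> (M *v b))" using spectral[OF sym] by blast
  let ?mu = "\<lambda>b. b \<bullet> (M *v b)"
  have nn: "0 \<le> ?mu b" for b using M unfolding symmetric_psd_def by blast
  let ?S = "Fm B (\<lambda>b. sqrt (?mu b))"
  have "?S ** ?S = Fm B (\<lambda>b. sqrt (?mu b) * sqrt (?mu b))" by (rule Fm_mul[OF B])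
  also have "\<dots> = M" using nn by (subst Mr) (simp add: real_sqrt_mult[symmetric])
  finally have "?S ** ?S = M" .
  moreover have "symmetric_psd ?S"
    unfolding symmetric_psd_def Fm_quad using nn by (auto simp: Fm_transpose intro!: sum_nonneg)
  ultimately show ?thesis by blast
qed

lemma sqrt_unique:
  fixes S T :: "real^'n^'n"
  assumes S: "symmetric_psd S" and T: "symmetric_psd T" and eq: "S ** S = T ** T"
  shows "S = T"
proof (rule ccontr)
  assume ne: "S \<noteq> T"
  let ?N = "S - T"
  have symS: "transpose S = S" and symT: "transpose T = T" using S T unfolding symmetric_psd_def by auto
  then have sym: "transpose ?N = ?N" by (simp add: transpose_diff)
  obtain B where B: "onb B" and Nr: "?N = Fm B (\<lambda>b. b \<bullet> (?N *v b))" using spectral[OF sym] by blast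
  obtain v where v: "v \<in> B" "v \<bullet> (?N *v v) \<noteq> 0"
  proof (rule ccontr)
    assume "\<not> thesis"
    then have "\<forall>b\<in>B. b \<bullet> (?N *v b) = 0" using that by blast
    then have "?N = Fm B (\<lambda>b. 0)" by (subst Nr) (rule Fm_cong, simp)
    then have "S - T = 0" by (simp add: Fm_zero)
    then show False using ne by simp
  qed
  define mu where "mu = v \<bullet> (?N *v v)"
  have Nv: "?N *v v = mu *\<^sub>R v" unfolding mu_def using Fm_eig[OF B v(1)] Nr by metis
  have vv: "v \<bullet> v = 1" using onb_norm[OF B v(1)] .
  have "S ** S - T ** T = S ** ?N + ?N ** T" by (simp add: mm_diff_l mm_diff_r)
  then have "0 = v \<bullet> ((S ** ?N + ?N ** T) *v v)" using eq by simp
  also have "\<dots> = v \<bullet> (S *v (?N *v v)) + v \<bullet> (?N *v (T *v v))"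
    by (simp add: matrix_vector_mult_add_rdistrib matrix_vector_mul_assoc inner_add_right)
  also have "v \<bullet> (?N *v (T *v v)) = (?N *v v) \<bullet> (T *v v)" by (rule sym_inner[OF sym])
  also have "\<dots> = mu * (v \<bullet> (T *v v))" unfolding Nv by simp
  also have "v \<bullet> (S *v (?N *v v)) = mu * (v \<bullet> (S *v v))" unfolding Nv by (simp add: matrix_vector_mult_scaleR)
  finally have "mu * (v \<bullet> (S *v v) + v \<bullet> (T *v v)) = 0" by (simp add: algebra_simps)
  moreover have "mu \<noteq> 0" using v(2) mu_def by simp
  ultimately have sum0: "v \<bullet> (S *v v) + v \<bullet> (T *v v) = 0" by simp
  have "0 \<le> v \<bullet> (S *v v)" "0 \<le> v \<bullet> (T *v v)" using S T unfolding symmetric_psd_def by auto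
  then have "v \<bullet> (S *v v) = 0" "v \<bullet> (T *v v) = 0" using sum0 by linarith+
  then have "S *v v = 0" "T *v v = 0" using psd_zero S T by blast+
  then have "?N *v v = 0" by (simp add: matrix_vector_mult_diff_rdistrib)
  then have "mu *\<^sub>R v = 0" using Nv by simp
  then show False using \<open>mu \<noteq> 0\<close> vv by auto
qed

lemma mat_sqrt_props:
  fixes M :: "real^'n^'n"
  assumes M: "symmetric_psd M"
  shows "symmetric_psd (mat_sqrt M) \<and> mat_sqrt M ** mat_sqrt M = M"
proof -
  obtain S where S: "symmetric_psd S \<and> S ** S = M" using sqrt_exists[OF M] by blast
  show ?thesis unfolding mat_sqrt_def
    by (rule theI[of _ S]) (use S sqrt_unique in auto)
qed

lemma psd_AtA: "symmetric_psd (transpose A ** (A::real^'n^'n))"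
  unfolding symmetric_psd_def
proof (intro conjI allI)
  show "transpose (transpose A ** A) = transpose A ** A" by (simp add: matrix_transpose_mul)
  fix x :: "real^'n"
  have "x \<bullet> ((transpose A ** A) *v x) = (A *v x) \<bullet> (A *v x)"
    by (simp add: matrix_vector_mul_assoc[symmetric] dot_lmul_matrix[symmetric] inner_commute)
  then show "0 \<le> x \<bullet> ((transpose A ** A) *v x)" by simp
qed

lemma pinv_unique:
  fixes B :: "real^'n^'n"
  assumes X: "B ** X ** B = B" "X ** B ** X = X" "transpose (B ** X) = B ** X" "transpose (X ** B) = X ** B"
  assumes Y: "B ** Y ** B = B" "Y ** B ** Y = Y" "transpose (B ** Y) = B ** Y" "transpose (Y ** B) = Y ** B"
  shows "X = Y"
proof -
  have "X = X ** (B ** X)" using X(2) by (simp add: matrix_mul_assoc)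
  also have "\<dots> = X ** transpose X ** transpose B" using X(3) by (metis matrix_transpose_mul matrix_mul_assoc)
  also have "transpose B = transpose B ** transpose Y ** transpose B"
    using Y(1) by (metis matrix_transpose_mul matrix_mul_assoc)
  also have "X ** transpose X ** (transpose B ** transpose Y ** transpose B) = X ** (transpose (B ** X) ** transpose (B ** Y))"
    by (simp add: matrix_transpose_mul matrix_mul_assoc)
  also have "\<dots> = X ** B ** Y" using X(3) Y(3) X(1) by (metis matrix_mul_assoc)
  finally have 1: "X = X ** B ** Y" .
  have "Y = (Y ** B) ** Y" using Y(2) by (simp add: matrix_mul_assoc)
  also have "\<dots> = transpose B ** transpose Y ** Y" using Y(4) by (metis matrix_transpose_mul matrix_mul_assoc)
  also have "transpose B = transpose B ** transpose X ** transpose B"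
    using X(1) by (metis matrix_transpose_mul matrix_mul_assoc)
  also have "transpose B ** transpose X ** transpose B ** transpose Y ** Y = (transpose (X ** B) ** transpose (Y ** B)) ** Y"
    by (simp add: matrix_transpose_mul matrix_mul_assoc)
  also have "\<dots> = X ** B ** Y" using X(4) Y(4) Y(2) by (metis matrix_mul_assoc)
  finally show ?thesis using 1 by simp
qed

lemma pinv_props:
  fixes S :: "real^'n^'n"
  assumes sym: "transpose S = S"
  shows "S ** pinv S ** S = S \<and> pinv S ** S ** pinv S = pinv S \<and>
         transpose (S ** pinv S) = S ** pinv S \<and> transpose (pinv S ** S) = pinv S ** S"
proof -
  obtain B where B: "onb B" and Sr0: "S = Fm B (\<lambda>b. b \<bullet> (S *v b))" using spectral[OF sym] by blast
  define mu where "mu = (\<lambda>b. b \<bullet> (S *v b))"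
  have Sr: "S = Fm B mu" using Sr0 unfolding mu_def .
  let ?X = "Fm B (\<lambda>b. inverse (mu b))"
  have e1: "Fm B mu ** ?X = Fm B (\<lambda>b. mu b * inverse (mu b))" by (rule Fm_mul[OF B])
  have e2: "?X ** Fm B mu = Fm B (\<lambda>b. inverse (mu b) * mu b)" by (rule Fm_mul[OF B])
  have "Fm B mu ** ?X ** Fm B mu = Fm B (\<lambda>b. mu b * inverse (mu b) * mu b)"
    unfolding e1 by (rule Fm_mul[OF B])
  also have "\<dots> = Fm B mu" by (rule Fm_cong) (simp add: field_simps)
  finally have p1: "S ** ?X ** S = S" using Sr by simp
  have "?X ** Fm B mu ** ?X = Fm B (\<lambda>b. inverse (mu b) * mu b * inverse (mu b))"
    unfolding e2 by (rule Fm_mul[OF B])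
  also have "\<dots> = ?X" by (rule Fm_cong) (simp add: field_simps)
  finally have p2: "?X ** S ** ?X = ?X" using Sr by simp
  have p3: "transpose (S ** ?X) = S ** ?X" unfolding Sr e1 by (rule Fm_transpose)
  have p4: "transpose (?X ** S) = ?X ** S" unfolding Sr e2 by (rule Fm_transpose)
  have ex: "\<exists>X. S ** X ** S = S \<and> X ** S ** X = X \<and> transpose (S ** X) = S ** X \<and> transpose (X ** S) = X ** S"
    using p1 p2 p3 p4 by blast
  show ?thesis unfolding pinv_def
    by (rule theI') (use ex pinv_unique in blast)
qed


lemma matpow_sq: "matpow S (2*k) = matpow (S ** S) k"
proof (induction k)
  case 0 then show ?case by simp
next
  case (Suc k)
  have "2 * Suc k = Suc (Suc (2*k))" by simp
  then show ?case using Suc by (simp add: matrix_mul_assoc)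
qed

lemma matpow_sq_odd: "matpow S (2*k+1) = S ** matpow (S ** S) k"
  by (simp add: matpow_sq)

lemma matpow_comm: "S ** matpow (S ** S) k = matpow (S ** S) k ** S"
proof (induction k)
  case 0 then show ?case by simp
next
  case (Suc k)
  have "S ** matpow (S ** S) (Suc k) = (S ** S) ** (S ** matpow (S ** S) k)" by (simp add: matrix_mul_assoc)
  also have "\<dots> = (S ** S) ** matpow (S ** S) k ** S" by (simp add: Suc matrix_mul_assoc)
  finally show ?case by simp
qed

lemma cosh_eq: "mat_cosh S = (\<Sum>k. (1 / fact (2*k)) *\<^sub>R matpow (S ** S) k)"
  unfolding mat_cosh_def matpow_sq ..

lemma sinh_eq:
  shows "mat_sinh S = S ** (\<Sum>k. (1 / fact (2*k+1)) *\<^sub>R matpow (S ** S) k)"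
    and "mat_sinh S = (\<Sum>k. (1 / fact (2*k+1)) *\<^sub>R matpow (S ** S) k) ** S"
proof -
  have sm: "summable (\<lambda>k. (1 / fact (2*k+1)) *\<^sub>R matpow (S ** S) k)"
    by (intro summable_matpow fact_le_aux2)
  show "mat_sinh S = S ** (\<Sum>k. (1 / fact (2*k+1)) *\<^sub>R matpow (S ** S) k)"
    unfolding mat_sinh_def matpow_sq_odd bounded_linear.suminf[OF bounded_linear_mm_left sm]
    by (simp add: mm_scaleR_r)
  show "mat_sinh S = (\<Sum>k. (1 / fact (2*k+1)) *\<^sub>R matpow (S ** S) k) ** S"
    unfolding mat_sinh_def matpow_sq_odd matpow_comm bounded_linear.suminf[OF bounded_linear_mm_right sm]
    by (simp add: mm_scaleR_l)
qed

lemma tDD_zero: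
  fixes D :: "real^'n^'m"
  assumes "transpose D ** D = 0"
  shows "D = 0"
proof -
  have "column j D \<bullet> column j D = 0" for j
    using assms unfolding matrix_mult_transpose_dot_column by (simp add: vec_eq_iff)
  then have "column j D = 0" for j by simp
  then show ?thesis by (simp add: vec_eq_iff column_def)
qed

lemma proj_absorb:
  fixes A S P :: "real^'n^'n"
  assumes SS: "S ** S = transpose A ** A" and SP: "S ** P = S"
  shows "A ** P = A"
proof -
  let ?Q = "P - mat 1"
  have SQ: "S ** ?Q = 0" using SP by (simp add: mm_diff_l)
  have "transpose (A ** ?Q) ** (A ** ?Q) = transpose ?Q ** ((transpose A ** A) ** ?Q)"
    by (simp add: matrix_transpose_mul matrix_mul_assoc)
  also have "\<dots> = transpose ?Q ** (S ** (S ** ?Q))" by (simp add: SS[symmetric] matrix_mul_assoc)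
  also have "\<dots> = 0" by (simp add: SQ)
  finally have "A ** ?Q = 0" by (rule tDD_zero)
  then show ?thesis by (simp add: mm_diff_l)
qed

theorem proposition1:
  fixes A :: "real^'n^'n"
  shows "mat_exp (block2 0 A (transpose A) 0) =
    block2 (mat_cosh (mat_sqrt (A ** transpose A)))
           (A ** pinv (mat_sqrt (transpose A ** A)) ** mat_sinh (mat_sqrt (transpose A ** A)))
           (mat_sinh (mat_sqrt (transpose A ** A)) ** pinv (mat_sqrt (transpose A ** A)) ** transpose A)
           (mat_cosh (mat_sqrt (transpose A ** A)))"
proof -
  define S where "S = mat_sqrt (transpose A ** A)"
  define S' where "S' = mat_sqrt (A ** transpose A)"
  define TY where "TY = (\<Sum>k. (1 / fact (2*k+1)) *\<^sub>R matpow (transpose A ** A) k)"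
  have Sp: "symmetric_psd S \<and> S ** S = transpose A ** A"
    unfolding S_def by (rule mat_sqrt_props[OF psd_AtA])
  have S'p: "S' ** S' = A ** transpose A"
    unfolding S'_def using mat_sqrt_props[OF psd_AtA[of "transpose A"]] by simp
  have symS: "transpose S = S" using Sp unfolding symmetric_psd_def by simp
  have SS: "S ** S = transpose A ** A" using Sp by simp
  note pv = pinv_props[OF symS]
  have e1: "A ** (pinv S ** S) = A"
    by (rule proj_absorb[OF SS]) (use pv in \<open>simp add: matrix_mul_assoc\<close>)
  have pv1: "S ** pinv S ** S = S" and pv3: "transpose (S ** pinv S) = S ** pinv S" using pv by auto
  have "transpose ((S ** pinv S) ** S) = transpose S" using pv1 by simp
  then have "transpose S ** transpose (S ** pinv S) = transpose S" by (simp only: matrix_transpose_mul)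
  then have "S ** (S ** pinv S) = S" by (simp only: pv3 symS)
  then have e2: "A ** (S ** pinv S) = A" by (rule proj_absorb[OF SS])
  then have e2': "(S ** pinv S) ** transpose A = transpose A"
    using pv by (metis matrix_transpose_mul transpose_transpose)
  have tr: "A ** pinv S ** mat_sinh S = A ** TY"
    unfolding sinh_eq(1) SS TY_def[symmetric] by (metis e1 matrix_mul_assoc)
  have bl: "mat_sinh S ** pinv S ** transpose A = TY ** transpose A"
    unfolding sinh_eq(2) SS TY_def[symmetric] by (metis e2' matrix_mul_assoc)
  show ?thesis
    unfolding exp_block S_def[symmetric] S'_def[symmetric] tr bl cosh_eq SS S'p TY_def ..
qed

end
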